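(* Let $n\ge 2$ and let $b\ge 0$ be an integer, with $b'=\lfloor b/2\rfloor$. Let $P(b)$ be the number of $n$-tuples $(x_1,\dots,x_n)$ of non-negative integers with $x_1+x_2+\cdots+x_{n-1}+2x_n=b$. Then $$P(b)=\sum_{k=0}^{\lfloor (n-1)/2\rfloor}\binom{n-1}{2k}\, C(b'-k+1;\,n-1)\quad\text{if } b \text{ is even},$$ $$P(b)=\sum_{k=0}^{\lfloor (n-2)/2\rfloor}\binom{n-1}{2k+1}\, C(b'-k+1;\,n-1)\quad\text{if } b \text{ is odd}.$$
   Context: For an integer $m$, $C(m;n-1)=\frac{1}{(n-1)!}\,m(m+1)\cdots(m+n-2)$ if $m>0$, and $C(m;n-1)=0$ otherwise. $\binom{n-1}{j}$ denotes the usual binomial coefficient. *)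

theory Defs
  imports Complex_Main
begin

definition Cc :: "int \<Rightarrow> nat \<Rightarrow> real" where
  "Cc m n = (if m > 0 then (\<Prod>i<n - 1. real_of_int (m + int i)) / fact (n - 1) else 0)"

definition Pcount :: "nat \<Rightarrow> nat \<Rightarrow> nat" where
  "Pcount n b = card {xs :: nat list. length xs = n \<and>
      (\<Sum>i<n - 1. xs ! i) + 2 * xs ! (n - 1) = b}"

end

theory Submission imports Defs begin

lemma Cc_eq: "Cc (int c - int k + 1) (Suc m) = real (if k \<le> c then (c - k + m) choose m else 0)"
proof (cases "k \<le> c")
  case True
  have "real ((c - k + m) choose m) = real (c - k + m) gchoose m" by (rule binomial_gbinomial)
  also have "\<dots> = pochhammer (real (c - k + m) - real m + 1) m / fact m" by (rule gbinomial_pochhammer')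
  also have "real (c - k + m) - real m + 1 = real_of_int (int c - int k + 1)" using True by simp
  finally show ?thesis using True by (simp add: Cc_def pochhammer_prod atLeast0LessThan)
next
  case False then show ?thesis by (simp add: Cc_def)
qed

lemma sum_Pow_card:
  fixes h :: "nat \<Rightarrow> nat"
  shows "(\<Sum>E\<in>Pow {..<m}. h (card E)) = (\<Sum>i\<le>m. (m choose i) * h i)"
proof -
  have "(\<Sum>E\<in>Pow {..<m}. h (card E)) = (\<Sum>i\<in>card ` Pow {..<m}. \<Sum>E\<in>{E\<in>Pow {..<m}. card E = i}. h (card E))"
    by (rule sum.group[symmetric]) auto
  also have "card ` Pow {..<m} = {..m}"
  proof
    show "card ` Pow {..<m} \<subseteq> {..m}" using card_mono[of "{..<m}"] by fastforce
    show "{..m} \<subseteq> card ` Pow {..<m}"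
    proof
      fix i assume "i \<in> {..m}"
      then have "card {..<i} = i" "{..<i} \<in> Pow {..<m}" by auto
      then show "i \<in> card ` Pow {..<m}" by (metis image_eqI)
    qed
  qed
  also have "(\<Sum>i\<in>{..m}. \<Sum>E\<in>{E\<in>Pow {..<m}. card E = i}. h (card E)) = (\<Sum>i\<le>m. (m choose i) * h i)"
  proof (rule sum.cong[OF refl])
    fix i
    have "(\<Sum>E\<in>{E\<in>Pow {..<m}. card E = i}. h (card E)) = (\<Sum>E\<in>{E. E \<subseteq> {..<m} \<and> card E = i}. h i)"
      by (rule sum.cong) auto
    also have "\<dots> = (m choose i) * h i" using n_subsets[of "{..<m}" i] by simp
    finally show "(\<Sum>E\<in>{E\<in>Pow {..<m}. card E = i}. h (card E)) = (m choose i) * h i" .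
  qed
  finally show ?thesis .
qed

lemma sum_even_part:
  fixes f :: "nat \<Rightarrow> real"
  assumes "\<And>i. odd i \<Longrightarrow> f i = 0"
  shows "(\<Sum>i\<le>m. f i) = (\<Sum>k=0..m div 2. f (2*k))"
proof -
  have "(\<Sum>i\<le>m. f i) = (\<Sum>i\<in>(\<lambda>k. 2*k) ` {0..m div 2}. f i)"
  proof (rule sum.mono_neutral_right)
    show "(\<lambda>k. 2*k) ` {0..m div 2} \<subseteq> {..m}" by auto
    show "\<forall>i\<in>{..m} - (\<lambda>k. 2*k) ` {0..m div 2}. f i = 0"
    proof
      fix i assume i: "i \<in> {..m} - (\<lambda>k. 2*k) ` {0..m div 2}"
      show "f i = 0"
      proof (cases "odd i")
        case True then show ?thesis by (rule assms)
      next
        case False then obtain k where "i = 2*k" by (auto elim: evenE)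
        with i show ?thesis by auto
      qed
    qed
  qed auto
  also have "\<dots> = (\<Sum>k=0..m div 2. f (2*k))" by (subst sum.reindex) (auto simp: inj_on_def)
  finally show ?thesis .
qed

lemma sum_odd_part:
  fixes f :: "nat \<Rightarrow> real"
  assumes "\<And>i. even i \<Longrightarrow> f i = 0" "m \<ge> 1"
  shows "(\<Sum>i\<le>m. f i) = (\<Sum>k=0..(m - 1) div 2. f (2*k+1))"
proof -
  have "(\<Sum>i\<le>m. f i) = (\<Sum>i\<in>(\<lambda>k. 2*k+1) ` {0..(m - 1) div 2}. f i)"
  proof (rule sum.mono_neutral_right)
    show "(\<lambda>k. 2*k+1) ` {0..(m - 1) div 2} \<subseteq> {..m}" using assms(2) by auto
    show "\<forall>i\<in>{..m} - (\<lambda>k. 2*k+1) ` {0..(m - 1) div 2}. f i = 0"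
    proof
      fix i assume i: "i \<in> {..m} - (\<lambda>k. 2*k+1) ` {0..(m - 1) div 2}"
      show "f i = 0"
      proof (cases "even i")
        case True then show ?thesis by (rule assms)
      next
        case False then obtain k where "i = 2*k+1" by (auto elim: oddE)
        with i show ?thesis by auto
      qed
    qed
  qed auto
  also have "\<dots> = (\<Sum>k=0..(m - 1) div 2. f (2*k+1))" by (subst sum.reindex) (auto simp: inj_on_def)
  finally show ?thesis .
qed

lemma sum_ind_card: "finite A \<Longrightarrow> (\<Sum>j\<in>A. (if P j then 1 else 0::nat)) = card {j\<in>A. P j}"
  by (simp add: sum.If_cases Int_def)

lemma Pcount_bij:
  "Pcount (Suc m) b = card {(E, ys). E \<subseteq> {..<m} \<and> length ys = Suc m \<and> card E + 2 * sum_list ys = b}"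
proof -
  define A where "A = {xs :: nat list. length xs = Suc m \<and> (\<Sum>i<m. xs ! i) + 2 * xs ! m = b}"
  define A' where "A' = {(E, ys). E \<subseteq> {..<m} \<and> length ys = Suc m \<and> card E + 2 * sum_list ys = b}"
  define f where "f = (\<lambda>xs::nat list. ({j. j<m \<and> odd (xs!j)}, map (\<lambda>j. if j<m then xs!j div 2 else xs!j) [0..<Suc m]))"
  define g where "g = (\<lambda>(E::nat set, ys::nat list). map (\<lambda>j. if j<m then 2*ys!j + (if j\<in>E then 1 else 0) else ys!j) [0..<Suc m])"
  have fA: "f xs \<in> A'" if "xs \<in> A" for xs
  proof -
    have len: "length xs = Suc m" and s: "(\<Sum>i<m. xs ! i) + 2 * xs ! m = b" using that by (auto simp: A_def)
    have c: "card {j. j<m \<and> odd (xs!j)} = (\<Sum>j<m. xs!j mod 2)"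
    proof -
      have "(\<Sum>j<m. xs!j mod 2) = (\<Sum>j<m. (if odd (xs!j) then 1 else 0))"
        by (rule sum.cong) (auto simp: odd_iff_mod_2_eq_one)
      also have "\<dots> = card {j\<in>{..<m}. odd (xs!j)}" by (rule sum_ind_card) simp
      finally show ?thesis by simp
    qed
    have sl: "sum_list (map (\<lambda>j. if j<m then xs!j div 2 else xs!j) [0..<Suc m]) = (\<Sum>j<m. xs!j div 2) + xs!m"
    proof -
      have "sum_list (map (\<lambda>j. if j<m then xs!j div 2 else xs!j) [0..<Suc m]) = (\<Sum>j<Suc m. (if j<m then xs!j div 2 else xs!j))"
        by (simp only: sum_set_upt_conv_sum_list_nat[symmetric] set_upt atLeast0LessThan)
      also have "\<dots> = (\<Sum>j<m. xs!j div 2) + xs!m" by simp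
      finally show ?thesis .
    qed
    have "(\<Sum>i<m. xs ! i) = (\<Sum>i<m. 2 * (xs ! i div 2) + xs!i mod 2)" by (rule sum.cong[OF refl]) presburger
    also have "\<dots> = 2 * (\<Sum>i<m. xs ! i div 2) + (\<Sum>i<m. xs!i mod 2)" by (simp only: sum.distrib sum_distrib_left)
    finally have "(\<Sum>i<m. xs ! i) = 2 * (\<Sum>i<m. xs ! i div 2) + (\<Sum>i<m. xs!i mod 2)" .
    then show ?thesis using s c sl by (auto simp: A'_def f_def)
  qed
  have gA: "g p \<in> A" if "p \<in> A'" for p
  proof -
    obtain E ys where p: "p = (E, ys)" by (cases p)
    have E: "E \<subseteq> {..<m}" and len: "length ys = Suc m" and s: "card E + 2 * sum_list ys = b"
      using that by (auto simp: A'_def p)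
    have "(\<Sum>i<m. g p ! i) = (\<Sum>i<m. 2 * ys!i + (if i\<in>E then 1 else 0))"
      by (rule sum.cong) (auto simp: g_def p nth_append)
    also have "\<dots> = 2 * (\<Sum>i<m. ys!i) + card E"
    proof -
      have "(\<Sum>i<m. (if i\<in>E then 1 else 0::nat)) = card {i\<in>{..<m}. i\<in>E}" by (rule sum_ind_card) simp
      also have "{i\<in>{..<m}. i\<in>E} = E" using E by auto
      finally show ?thesis by (simp add: sum.distrib sum_distrib_left)
    qed
    finally have 1: "(\<Sum>i<m. g p ! i) = 2 * (\<Sum>i<m. ys!i) + card E" .
    have 2: "g p ! m = ys ! m" by (simp add: g_def p nth_append)
    have 3: "sum_list ys = (\<Sum>i<m. ys!i) + ys!m" using len by (simp add: sum_list_sum_nth atLeast0LessThan)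
    show ?thesis using 1 2 3 s by (simp add: A_def g_def p)
  qed
  have gf: "g (f xs) = xs" if "xs \<in> A" for xs
  proof -
    have len: "length xs = Suc m" using that by (auto simp: A_def)
    show ?thesis
      by (rule nth_equalityI) (auto simp: g_def f_def len nth_append less_Suc_eq odd_iff_mod_2_eq_one)
  qed
  have fg: "f (g p) = p" if "p \<in> A'" for p
  proof -
    obtain E ys where p: "p = (E, ys)" by (cases p)
    have E: "E \<subseteq> {..<m}" and len: "length ys = Suc m"
      using that by (auto simp: A'_def p)
    have 1: "{j. j<m \<and> odd (g p!j)} = E" using E by (auto simp: g_def p nth_append)
    have 2: "map (\<lambda>j. if j<m then g p!j div 2 else g p!j) [0..<Suc m] = ys"
      by (rule nth_equalityI) (auto simp: g_def p len nth_append less_Suc_eq)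
    show ?thesis unfolding f_def using 1 2 p by (metis (no_types, lifting))
  qed
  have "bij_betw f A A'"
    by (rule bij_betw_byWitness[where f'=g]) (use fA gA gf fg in auto)
  then have "card A = card A'" by (rule bij_betw_same_card)
  then show ?thesis by (simp add: Pcount_def A_def A'_def)
qed

lemma aux1: "k \<le> (a::nat) \<Longrightarrow> (2*a - 2*k) div 2 + m = a + m - k" by presburger
lemma aux2: "k \<le> (a::nat) \<Longrightarrow> (Suc (2*a) - Suc (2*k)) div 2 + m = a + m - k" by presburger

definition hh :: "nat \<Rightarrow> nat \<Rightarrow> nat \<Rightarrow> nat" where
  "hh m b i = (if i \<le> b \<and> even (b - i) then ((b - i) div 2 + m) choose m else 0)"

lemma fiber_card:
  "card {ys::nat list. length ys = Suc m \<and> c + 2 * sum_list ys = b} = hh m b c"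
proof (cases "c \<le> b \<and> even (b - c)")
  case True
  have "{ys::nat list. length ys = Suc m \<and> c + 2 * sum_list ys = b} = {ys. length ys = Suc m \<and> sum_list ys = (b - c) div 2}"
    using True by (auto elim!: evenE)
  moreover have "card {ys::nat list. length ys = Suc m \<and> sum_list ys = (b - c) div 2} = ((b - c) div 2 + m) choose m"
    using card_length_sum_list[of "Suc m" "(b - c) div 2"] binomial_symmetric[of m "(b - c) div 2 + m"] by simp
  ultimately show ?thesis using True unfolding hh_def by presburger
next
  case False
  have emp: "{ys::nat list. length ys = Suc m \<and> c + 2 * sum_list ys = b} = {}"
    using False by auto
  have "hh m b c = 0" using False unfolding hh_def by argo
  then show ?thesis by (simp only: emp card.empty)
qed

lemma fiber_finite:
  "finite {ys::nat list. length ys = Suc m \<and> c + 2 * sum_list ys = b}"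
proof (rule finite_subset)
  show "{ys::nat list. length ys = Suc m \<and> c + 2 * sum_list ys = b} \<subseteq> {ys. set ys \<subseteq> {..b} \<and> length ys = Suc m}"
    by (auto dest!: member_le_sum_list)
  show "finite {ys. set ys \<subseteq> {..b} \<and> length ys = Suc m}" by (rule finite_lists_length_eq) simp
qed

lemma Pcount_sum: "Pcount (Suc m) b = (\<Sum>i\<le>m. (m choose i) * hh m b i)"
proof -
  have "{(E, ys). E \<subseteq> {..<m} \<and> length ys = Suc m \<and> card E + 2 * sum_list ys = b}
     = (SIGMA E:Pow {..<m}. {ys. length ys = Suc m \<and> card E + 2 * sum_list ys = b})" by auto
  then have "Pcount (Suc m) b = (\<Sum>E\<in>Pow {..<m}. card {ys::nat list. length ys = Suc m \<and> card E + 2 * sum_list ys = b})"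
    by (simp add: Pcount_bij fiber_finite)
  also have "\<dots> = (\<Sum>E\<in>Pow {..<m}. hh m b (card E))" by (simp add: fiber_card)
  also have "\<dots> = (\<Sum>i\<le>m. (m choose i) * hh m b i)" by (rule sum_Pow_card)
  finally show ?thesis .
qed

theorem mainTheorem4:
  fixes n b :: nat
  assumes "n \<ge> 2"
  shows "(even b \<longrightarrow> real (Pcount n b) =
            (\<Sum>k = 0..(n - 1) div 2. real ((n - 1) choose (2 * k)) *
               Cc (int (b div 2) - int k + 1) n))
       \<and> (odd b \<longrightarrow> real (Pcount n b) =
            (\<Sum>k = 0..(n - 2) div 2. real ((n - 1) choose (2 * k + 1)) *
               Cc (int (b div 2) - int k + 1) n))"
proof -
  obtain m where n: "n = Suc m" and m: "m \<ge> 1" using assms by (cases n) auto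
  have P: "real (Pcount n b) = (\<Sum>i\<le>m. real (m choose i) * real (hh m b i))"
    unfolding n Pcount_sum by simp
  show ?thesis
  proof (intro conjI impI)
    assume e: "even b"
    have "(\<Sum>i\<le>m. real (m choose i) * real (hh m b i)) = (\<Sum>k=0..m div 2. real (m choose (2*k)) * real (hh m b (2*k)))"
      by (rule sum_even_part) (use e in \<open>auto simp: hh_def\<close>)
    also have "\<dots> = (\<Sum>k = 0..(n - 1) div 2. real ((n - 1) choose (2 * k)) * Cc (int (b div 2) - int k + 1) n)"
    proof (rule sum.cong)
      fix k
      have "hh m b (2*k) = (if k \<le> b div 2 then (b div 2 - k + m) choose m else 0)"
        using e by (auto simp: hh_def aux1 elim!: evenE)
      then show "real (m choose (2*k)) * real (hh m b (2*k)) = real ((n - 1) choose (2 * k)) * Cc (int (b div 2) - int k + 1) n"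
        by (simp add: n Cc_eq)
    qed (simp add: n)
    finally show "real (Pcount n b) = (\<Sum>k = 0..(n - 1) div 2. real ((n - 1) choose (2 * k)) * Cc (int (b div 2) - int k + 1) n)"
      using P by simp
  next
    assume o: "odd b"
    have "(\<Sum>i\<le>m. real (m choose i) * real (hh m b i)) = (\<Sum>k=0..(m - 1) div 2. real (m choose (2*k+1)) * real (hh m b (2*k+1)))"
      by (rule sum_odd_part) (use o m in \<open>auto simp: hh_def\<close>)
    also have "\<dots> = (\<Sum>k = 0..(n - 2) div 2. real ((n - 1) choose (2 * k + 1)) * Cc (int (b div 2) - int k + 1) n)"
    proof (rule sum.cong)
      fix k
      have "hh m b (2*k+1) = (if k \<le> b div 2 then (b div 2 - k + m) choose m else 0)"
        using o by (auto simp: hh_def aux1 elim!: oddE)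
      then show "real (m choose (2*k+1)) * real (hh m b (2*k+1)) = real ((n - 1) choose (2 * k + 1)) * Cc (int (b div 2) - int k + 1) n"
        by (simp add: n Cc_eq)
    qed (simp add: n)
    finally show "real (Pcount n b) = (\<Sum>k = 0..(n - 2) div 2. real ((n - 1) choose (2 * k + 1)) * Cc (int (b div 2) - int k + 1) n)"
      using P by simp
  qed
qed

end
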